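(* A function $g\in\mathcal C$ satisfies $Tg=g$ if and only if $g\colon[0,1]\to[0,1]$ solves $-\gamma g'=g^{-1}$ for some $\gamma>0$ (with $g^{-1}$ the compositional inverse). In that case moreover: (a) $g\in\breve{\mathcal D}^\sharp$; (b) $\int g=\gamma$; (c) $\sigma(g)=\gamma$; (d) $g^*$ and $g'$ are continuously differentiable on $(0,1]$; (e) $g''(1)=1$ and $(g^* )'(1)=-\gamma$.
   Context: "Decreasing" means non-increasing; $\int f:=\int_0^1 f(x)\,dx$. $\mathcal E$: measurable decreasing $f\colon[0,1]\to[0,\infty)$ with $f(0)=1$ and $\int f>0$. $\mathcal C$: continuous $f\in\mathcal E$ with $f(1)=0$; $\breve{\mathcal C}$: convex $f\in\mathcal C$. $\mathcal D$: strictly decreasing $f\in\mathcal C$. $\mathcal D'$: $f\in\mathcal D$ continuously differentiable on $(0,1]$. $\mathcal D^\sharp$: $f\in\mathcal D'$ with $f'(1)=0$ and $\lim_{x\to0}f'(x)$ existing in $(-\infty,0]$; $\breve{\mathcal D}^\sharp:=\mathcal D^\sharp\cap\breve{\mathcal C}$. For $g\in\breve{\mathcal C}$, the stride is $\sigma(g):=\sup\{\alpha\ge0:\ \alpha-x\le\alpha g(x)\ \forall x\in[0,1]\}$. For $g\in\mathcal E$, $g^*(y):=\sup\{x\in[0,1]:g(x)\ge y\}$ (equal to $g^{-1}$ when $g\in\mathcal D$). $T$ on $\mathcal E$: $(Tf)(x)=\frac{\int_x^1f^*}{\int f}$. *)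

theory Defs
  imports "HOL-Analysis.Analysis"
begin

text \<open>All functions are real-valued functions considered on the interval [0,1];
  "decreasing" means non-increasing; integrals are over subintervals of [0,1].\<close>

definition decreasing01 :: "(real \<Rightarrow> real) \<Rightarrow> bool" where
  "decreasing01 f \<longleftrightarrow> (\<forall>x y. 0 \<le> x \<and> x \<le> y \<and> y \<le> 1 \<longrightarrow> f y \<le> f x)"

definition strictly_decreasing01 :: "(real \<Rightarrow> real) \<Rightarrow> bool" where
  "strictly_decreasing01 f \<longleftrightarrow> (\<forall>x y. 0 \<le> x \<and> x < y \<and> y \<le> 1 \<longrightarrow> f y < f x)"

definition classE :: "(real \<Rightarrow> real) \<Rightarrow> bool" where
  "classE f \<longleftrightarrow> set_borel_measurable lborel {0..1} f \<and> decreasing01 f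
     \<and> (\<forall>x\<in>{0..1}. 0 \<le> f x) \<and> f 0 = 1 \<and> integral {0..1} f > 0"

definition classC :: "(real \<Rightarrow> real) \<Rightarrow> bool" where
  "classC f \<longleftrightarrow> classE f \<and> continuous_on {0..1} f \<and> f 1 = 0"

definition classC_convex :: "(real \<Rightarrow> real) \<Rightarrow> bool" where
  "classC_convex f \<longleftrightarrow> classC f \<and> convex_on {0..1} f"

definition classD :: "(real \<Rightarrow> real) \<Rightarrow> bool" where
  "classD f \<longleftrightarrow> classC f \<and> strictly_decreasing01 f"

definition deriv_on01 :: "(real \<Rightarrow> real) \<Rightarrow> (real \<Rightarrow> real) \<Rightarrow> bool" where
  "deriv_on01 h h' \<longleftrightarrow> (\<forall>x\<in>{0<..1}. (h has_real_derivative h' x) (at x within {0..1}))"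

definition C1_on01 :: "(real \<Rightarrow> real) \<Rightarrow> bool" where
  "C1_on01 h \<longleftrightarrow> (\<exists>h'. deriv_on01 h h' \<and> continuous_on {0<..1} h')"

definition classD' :: "(real \<Rightarrow> real) \<Rightarrow> bool" where
  "classD' f \<longleftrightarrow> classD f \<and> C1_on01 f"

definition classD_sharp :: "(real \<Rightarrow> real) \<Rightarrow> bool" where
  "classD_sharp f \<longleftrightarrow> classD' f \<and>
     (\<exists>f'. deriv_on01 f f' \<and> f' 1 = 0 \<and> (\<exists>L\<le>0. (f' \<longlongrightarrow> L) (at_right 0)))"

definition classD_sharp_convex :: "(real \<Rightarrow> real) \<Rightarrow> bool" where
  "classD_sharp_convex f \<longleftrightarrow> classD_sharp f \<and> classC_convex f"

definition stride :: "(real \<Rightarrow> real) \<Rightarrow> real" where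
  "stride g = Sup {\<alpha>. \<alpha> \<ge> 0 \<and> (\<forall>x\<in>{0..1}. \<alpha> - x \<le> \<alpha> * g x)}"

definition gstar :: "(real \<Rightarrow> real) \<Rightarrow> real \<Rightarrow> real" where
  "gstar g y = Sup {x\<in>{0..1}. g x \<ge> y}"

definition Top :: "(real \<Rightarrow> real) \<Rightarrow> real \<Rightarrow> real" where
  "Top f x = integral {x..1} (gstar f) / integral {0..1} f"

definition solves_ode :: "real \<Rightarrow> (real \<Rightarrow> real) \<Rightarrow> bool" where
  "solves_ode \<gamma> g \<longleftrightarrow> bij_betw g {0..1} {0..1} \<and>
     (\<forall>x\<in>{0..1}. (g has_real_derivative (- inv_into {0..1} g x / \<gamma>)) (at x within {0..1}))"

end

theory Submission
  imports Defs
begin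

lemma inj_facts:
  assumes C: "classC g" and inj: "inj_on g {0..1}"
  shows "g ` {0..1} = {0..1}" and "strictly_decreasing01 g"
    and "continuous_on {0..1} (inv_into {0..1} g)"
    and "\<And>y. y \<in> {0..1} \<Longrightarrow> inv_into {0..1} g y \<in> {0..1} \<and> g (inv_into {0..1} g y) = y"
    and "\<And>x. x \<in> {0..1} \<Longrightarrow> inv_into {0..1} g (g x) = x"
    and "\<And>y. y \<in> {0..1} \<Longrightarrow> gstar g y = inv_into {0..1} g y"
    and "inv_into {0..1} g 0 = 1" and "inv_into {0..1} g 1 = 0"
    and "\<And>x y. 0 \<le> x \<Longrightarrow> x \<le> y \<Longrightarrow> y \<le> 1 \<Longrightarrow> inv_into {0..1} g y \<le> inv_into {0..1} g x"
proof -
  let ?h = "inv_into {0..1} g"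
  have dec: "decreasing01 g" and nn: "\<And>x. x\<in>{0..1} \<Longrightarrow> 0 \<le> g x" and g0: "g 0 = 1"
    and cont: "continuous_on {0..1} g" and g1: "g 1 = 0"
    using C unfolding classC_def classE_def by auto
  show img: "g ` {0..1} = {0..1}"
  proof
    show "g ` {0..1} \<subseteq> {0..1}"
    proof
      fix y assume "y \<in> g ` {0..1}"
      then obtain x where x: "x \<in> {0..1}" "y = g x" by auto
      have "g x \<le> g 0" using dec x unfolding decreasing01_def by auto
      then show "y \<in> {0..1}" using nn[OF x(1)] x g0 by auto
    qed
    show "{0..1} \<subseteq> g ` {0..1}"
    proof
      fix y :: real assume y: "y \<in> {0..1}"
      obtain x where "0 \<le> x" "x \<le> 1" "g x = y"
        using IVT2'[of g 1 y 0] y g0 g1 cont by auto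
      then show "y \<in> g ` {0..1}" by force
    qed
  qed
  show sd: "strictly_decreasing01 g"
    unfolding strictly_decreasing01_def
  proof (intro allI impI)
    fix x y :: real assume xy: "0 \<le> x \<and> x < y \<and> y \<le> 1"
    have "g y \<le> g x" using dec xy unfolding decreasing01_def by auto
    moreover have "g y \<noteq> g x" using inj xy unfolding inj_on_def by force
    ultimately show "g y < g x" by simp
  qed
  show hx: "\<And>x. x \<in> {0..1} \<Longrightarrow> ?h (g x) = x"
    using inj by (simp add: inv_into_f_f)
  show hy: "\<And>y. y \<in> {0..1} \<Longrightarrow> ?h y \<in> {0..1} \<and> g (?h y) = y"
    using img by (metis f_inv_into_f inv_into_into)
  show "continuous_on {0..1} ?h"
    using continuous_on_inv[OF cont compact_Icc, of ?h] hx img by auto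
  show "?h 0 = 1" using hx[of 1] g1 by simp
  show "?h 1 = 0" using hx[of 0] g0 by simp
  show hmono: "\<And>x y. 0 \<le> x \<Longrightarrow> x \<le> y \<Longrightarrow> y \<le> 1 \<Longrightarrow> ?h y \<le> ?h x"
  proof (rule ccontr)
    fix x y :: real assume a: "0 \<le> x" "x \<le> y" "y \<le> 1" "\<not> ?h y \<le> ?h x"
    have "\<forall>u v. 0 \<le> u \<and> u < v \<and> v \<le> 1 \<longrightarrow> g v < g u" using sd unfolding strictly_decreasing01_def by auto
    moreover have "?h x \<in> {0..1}" "?h y \<in> {0..1}" using a hy[of x] hy[of y] by auto
    ultimately have "g (?h y) < g (?h x)" using a(4) by auto
    then show False using a hy[of x] hy[of y] by auto
  qed
  show "\<And>y. y \<in> {0..1} \<Longrightarrow> gstar g y = ?h y"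
  proof -
    fix y :: real assume y: "y \<in> {0..1}"
    have hyy: "?h y \<in> {0..1}" "g (?h y) = y" using hy[OF y] by auto
    have A: "x \<le> ?h y" if x: "0 \<le> x" "x \<le> 1" "y \<le> g x" for x
    proof (rule ccontr)
      assume "\<not> x \<le> ?h y"
      then have "g x < g (?h y)" using sd x hyy unfolding strictly_decreasing01_def
        by (meson atLeastAtMost_iff not_le)
      then show False using hyy x by auto
    qed
    have B: "y \<le> g x" if x: "0 \<le> x" "x \<le> ?h y" for x
    proof -
      have decD: "\<And>u v. 0 \<le> u \<Longrightarrow> u \<le> v \<Longrightarrow> v \<le> 1 \<Longrightarrow> g v \<le> g u"
        using dec unfolding decreasing01_def by blast
      have "g (?h y) \<le> g x" using decD[of x "?h y"] x hyy by auto
      then show "y \<le> g x" using hyy by simp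
    qed
    have "{x\<in>{0..1}. g x \<ge> y} = {0..?h y}"
      using A B hyy by force
    then show "gstar g y = ?h y" unfolding gstar_def using hy[OF y] by simp
  qed
qed

lemma gstar_basic:
  assumes g0: "g 0 = 1" and y: "y \<le> 1"
  shows "x \<in> {0..1} \<Longrightarrow> y \<le> g x \<Longrightarrow> x \<le> gstar g y"
    and "0 \<le> gstar g y" and "gstar g y \<le> 1"
    and "y' \<le> y \<Longrightarrow> gstar g y \<le> gstar g y'"
proof -
  let ?S = "\<lambda>y. {x\<in>{0..1}. g x \<ge> y}"
  have ne: "0 \<in> ?S y" using g0 y by auto
  have bdd: "bdd_above (?S z)" for z by (rule bdd_aboveI[of _ 1]) auto
  show "x \<in> {0..1} \<Longrightarrow> y \<le> g x \<Longrightarrow> x \<le> gstar g y"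
    unfolding gstar_def by (rule cSup_upper) (use bdd in auto)
  show "0 \<le> gstar g y"
    unfolding gstar_def by (rule cSup_upper[OF ne bdd])
  show "gstar g y \<le> 1"
    unfolding gstar_def by (rule cSup_least) (use ne in blast, simp)
  show "y' \<le> y \<Longrightarrow> gstar g y \<le> gstar g y'"
    unfolding gstar_def apply (rule cSup_subset_mono) apply (use ne in blast) apply (rule bdd) by auto
qed

lemma fwd_inj:
  assumes C: "classC g" and T: "\<forall>x\<in>{0..1}. Top g x = g x"
  shows "inj_on g {0..1}"
proof -
  let ?G = "gstar g" and ?I = "integral {0..1} g"
  have dec: "decreasing01 g" and g0: "g 0 = 1" and Ipos: "?I > 0"
    and cont: "continuous_on {0..1} g" and g1: "g 1 = 0"
    using C unfolding classC_def classE_def by auto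
  have "Top g 0 = 1" using T g0 by auto
  then have "integral {0..1} ?G \<noteq> 0" unfolding Top_def by auto
  then have intG: "?G integrable_on {0..1}" using not_integrable_integral by blast
  have key: "g a \<noteq> g b" if ab: "0 \<le> a" "a < b" "b \<le> 1" for a b
  proof
    assume eq: "g a = g b"
    have intab: "?G integrable_on {c..d}" if "0 \<le> c" "d \<le> 1" for c d
      by (rule integrable_subinterval_real[OF intG]) (use that in auto)
    have "Top g a = Top g b" using T eq ab by auto
    then have e1: "integral {a..1} ?G = integral {b..1} ?G" unfolding Top_def using Ipos by simp
    have "integral {a..b} ?G + integral {b..1} ?G = integral {a..1} ?G"
      by (rule Henstock_Kurzweil_Integration.integral_combine) (use ab intab in auto)
    then have z: "integral {a..b} ?G = 0" using e1 by simp
    define m where "m = (a + b) / 2"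
    have m: "a < m" "m < b" "0 \<le> m" "m < 1" using ab unfolding m_def by auto
    have "integral {a..m} ?G + integral {m..b} ?G = integral {a..b} ?G"
      by (rule Henstock_Kurzweil_Integration.integral_combine) (use ab m intab in auto)
    moreover have "integral {m..b} ?G \<ge> 0"
      by (rule integral_nonneg) (use intab ab m gstar_basic(2)[of g] g0 in auto)
    moreover have "integral {a..m} ?G \<ge> integral {a..m} (\<lambda>_. ?G m)"
      by (rule integral_le) (use intab ab m gstar_basic(4)[of g] g0 in auto)
    moreover have "integral {a..m} (\<lambda>_. ?G m) = (m - a) * ?G m" using m by simp
    moreover have "?G m > 0"
    proof -
      obtain x where x: "0 \<le> x" "x \<le> 1" "g x = m"
        using IVT2'[of g 1 m 0] m g0 g1 cont by auto
      have "x \<noteq> 0" using x g0 m by auto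
      moreover have "x \<le> ?G m" using gstar_basic(1)[of g m x] g0 x m by auto
      ultimately show ?thesis using x by auto
    qed
    ultimately have "integral {a..b} ?G > 0" using m
      by (smt (verit) mult_pos_pos)
    then show False using z by simp
  qed
  show ?thesis
    unfolding inj_on_def
    by (metis atLeastAtMost_iff key linorder_neqE_linordered_idom)
qed


lemma ode_basic:
  assumes C: "classC g" and gp: "\<gamma> > 0" and S: "solves_ode \<gamma> g"
  defines "h \<equiv> inv_into {0..1} g"
  shows "inj_on g {0..1}"
    and "\<And>x. x \<in> {0..1} \<Longrightarrow> (g has_real_derivative (- h x / \<gamma>)) (at x within {0..1})"
    and "\<And>x. x \<in> {0..1} \<Longrightarrow> g x = integral {x..1} h / \<gamma>"
    and "integral {0..1} h = \<gamma>"
    and "integral {0..1} g = \<gamma>"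
proof -
  have inj: "inj_on g {0..1}" using S unfolding solves_ode_def bij_betw_def by auto
  then show "inj_on g {0..1}" .
  note F = inj_facts[OF C inj, folded h_def]
  have g0: "g 0 = 1" and g1: "g 1 = 0" using C unfolding classC_def classE_def by auto
  show der: "\<And>x. x \<in> {0..1} \<Longrightarrow> (g has_real_derivative (- h x / \<gamma>)) (at x within {0..1})"
    using S unfolding solves_ode_def h_def by auto
  show repr: "\<And>x. x \<in> {0..1} \<Longrightarrow> g x = integral {x..1} h / \<gamma>"
  proof -
    fix x :: real assume x: "x \<in> {0..1}"
    have "((\<lambda>u. - h u / \<gamma>) has_integral (g 1 - g x)) {x..1}"
      apply (rule fundamental_theorem_of_calculus)
      using x apply simp
      apply (subst has_real_derivative_iff_has_vector_derivative[symmetric])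
      apply (rule DERIV_subset[OF der])
      using x by auto
    from has_integral_mult_right[OF this, of "- \<gamma>"]
    have "((\<lambda>u. h u) has_integral (\<gamma> * g x)) {x..1}" using gp g1 by simp
    then have "integral {x..1} h = \<gamma> * g x" by (simp add: integral_unique)
    then show "g x = integral {x..1} h / \<gamma>" using gp by simp
  qed
  have Ih: "integral {0..1} h = \<gamma>" using repr[of 0] g0 gp by simp
  then show "integral {0..1} h = \<gamma>" .
  define H where "H u = integral {u..1} h" for u
  define R where "R x = x * g x + H (g x)" for x
  have Hd: "(H has_real_derivative - h t) (at t within {0..1})" if "t \<in> {0..1}" for t
    unfolding H_def by (rule integral_has_real_derivative'[OF F(3) that])
  have "(R has_real_derivative g x) (at x within {0..1})" if x: "x \<in> {0..1}" for x
  proof -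
    have gx: "g x \<in> {0..1}" using F(1) x by auto
    have c: "(H \<circ> g has_real_derivative (- h (g x)) * (- h x / \<gamma>)) (at x within {0..1})"
      apply (rule DERIV_image_chain)
      using Hd[OF gx] F(1) apply simp
      by (rule der[OF x])
    have "((\<lambda>x. x * g x + (H \<circ> g) x) has_real_derivative
        (1 * g x + x * (- h x / \<gamma>)) + (- h (g x)) * (- h x / \<gamma>)) (at x within {0..1})"
      apply (rule DERIV_add[OF _ c])
      using DERIV_mult'[OF DERIV_ident der[OF x]] by (simp add: algebra_simps)
    moreover have "h (g x) = x" using F(5)[OF x] .
    ultimately show ?thesis unfolding R_def o_def by simp
  qed
  then have "(g has_integral (R 1 - R 0)) {0..1}"
    by (intro fundamental_theorem_of_calculus) (auto simp: has_real_derivative_iff_has_vector_derivative)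
  moreover have "R 1 - R 0 = \<gamma>" unfolding R_def H_def using g0 g1 Ih by simp
  ultimately show "integral {0..1} g = \<gamma>" by (simp add: integral_unique)
qed


lemma ode_more:
  assumes C: "classC g" and gp: "\<gamma> > 0" and S: "solves_ode \<gamma> g"
  defines "h \<equiv> inv_into {0..1} g"
  shows "convex_on {0..1} g"
    and "stride g = \<gamma>"
    and "\<And>y. y \<in> {0<..1} \<Longrightarrow> (h has_real_derivative (- \<gamma> / h (h y))) (at y within {0..1})"
    and "continuous_on {0<..1} (\<lambda>y. - \<gamma> / h (h y))"
    and "continuous_on {0<..1} (\<lambda>y. 1 / h (h y))"
proof -
  note B = ode_basic[OF C gp S, folded h_def]
  note F = inj_facts[OF C B(1), folded h_def]
  have g0: "g 0 = 1" and g1: "g 1 = 0" using C unfolding classC_def classE_def by auto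
  have hint: "h integrable_on {c..d}" if "0 \<le> c" "d \<le> 1" for c d
    by (rule integrable_continuous_real, rule continuous_on_subset[OF F(3)]) (use that in auto)
  show "convex_on {0..1} g"
  proof (rule convex_on_linorderI)
    show "convex {0..1::real}" by simp
    fix t x y :: real
    assume t: "0 < t" "t < 1" and xy: "x \<in> {0..1}" "y \<in> {0..1}" "x < y"
    define z where "z = (1 - t) * x + t * y"
    have zx: "z - x = t * (y - x)" and yz: "y - z = (1 - t) * (y - x)" unfolding z_def by algebra+
    have p1: "t * (y - x) > 0" using t xy by auto
    have p2: "(1 - t) * (y - x) > 0" using t xy by auto
    have z1: "x < z" using zx p1 by linarith
    have z2: "z < y" using yz p2 by linarith
    note z = z1 z2
    have zI: "z \<in> {0..1}" using z xy by auto
    define A where "A = integral {x..z} h"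
    define B' where "B' = integral {z..y} h"
    have GA: "A + integral {z..1} h = integral {x..1} h" unfolding A_def
      by (rule Henstock_Kurzweil_Integration.integral_combine) (use z xy zI hint in auto)
    have GB: "B' + integral {y..1} h = integral {z..1} h" unfolding B'_def
      by (rule Henstock_Kurzweil_Integration.integral_combine) (use z xy zI hint in auto)
    have "A \<ge> integral {x..z} (\<lambda>_. h z)" unfolding A_def
      by (rule integral_le) (use z xy zI hint F(9) in auto)
    then have Ale: "A \<ge> t * (y - x) * h z" using z zx by simp
    have "B' \<le> integral {z..y} (\<lambda>_. h z)" unfolding B'_def
      by (rule integral_le) (use z xy zI hint F(9) in auto)
    then have Ble: "B' \<le> (1 - t) * (y - x) * h z" using z yz by simp
    have "(1 - t) * A \<ge> (1 - t) * (t * (y - x) * h z)" using Ale t by (intro mult_left_mono) auto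
    moreover have "t * B' \<le> t * ((1 - t) * (y - x) * h z)" using Ble t by (intro mult_left_mono) auto
    ultimately have key: "integral {z..1} h \<le> (1 - t) * integral {x..1} h + t * integral {y..1} h"
      unfolding GA[symmetric] GB[symmetric] by (simp add: algebra_simps)
    have "g z \<le> (1 - t) * g x + t * g y"
      unfolding B(3)[OF zI] B(3)[OF xy(1)] B(3)[OF xy(2)] using key gp
      by (simp add: field_simps)
    then show "g ((1 - t) *\<^sub>R x + t *\<^sub>R y) \<le> (1 - t) * g x + t * g y" unfolding z_def by simp
  qed
  show "stride g = \<gamma>"
  proof -
    let ?S = "{\<alpha>. \<alpha> \<ge> 0 \<and> (\<forall>x\<in>{0..1}. \<alpha> - x \<le> \<alpha> * g x)}"
    have mem: "\<gamma> \<in> ?S"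
    proof -
      have "\<gamma> - x \<le> \<gamma> * g x" if x: "x \<in> {0..1}" for x
      proof -
        define \<phi> where "\<phi> u = g u - 1 + u / \<gamma>" for u
        have "((\<lambda>u. (1 - h u) / \<gamma>) has_integral (\<phi> x - \<phi> 0)) {0..x}"
        proof (rule fundamental_theorem_of_calculus)
          show "0 \<le> x" using x by simp
          fix u assume u: "u \<in> {0..x}"
          have uI: "u \<in> {0..1}" using u x by auto
          have d1: "(\<phi> has_real_derivative (- h u / \<gamma> - 0 + 1 / \<gamma>)) (at u within {0..1})"
            unfolding \<phi>_def
            by (rule DERIV_add[OF DERIV_diff[OF B(2)[OF uI] DERIV_const] DERIV_cdivide[OF DERIV_ident]])
          have "(\<phi> has_real_derivative ((1 - h u) / \<gamma>)) (at u within {0..x})"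
          proof -
            have "- h u / \<gamma> - 0 + 1 / \<gamma> = (1 - h u) / \<gamma>" by (simp add: diff_divide_distrib)
            moreover have "{0..x} \<subseteq> {0..1}" using x by auto
            ultimately show ?thesis using DERIV_subset[OF d1] by metis
          qed
          then show "(\<phi> has_vector_derivative ((1 - h u) / \<gamma>)) (at u within {0..x})"
            by (simp add: has_real_derivative_iff_has_vector_derivative)
        qed
        then have "0 \<le> \<phi> x - \<phi> 0"
          by (rule has_integral_nonneg) (use x F(4) gp in auto)
        then have "0 \<le> g x - 1 + x / \<gamma>" unfolding \<phi>_def using g0 by simp
        then have "0 \<le> \<gamma> * (g x - 1 + x / \<gamma>)" using gp by simp
        then show ?thesis using gp by (simp add: algebra_simps)
      qed
      then show ?thesis using gp by auto
    qed
    have ub: "\<alpha> \<le> \<gamma>" if a: "\<alpha> \<in> ?S" for \<alpha>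
    proof (rule ccontr)
      assume "\<not> \<alpha> \<le> \<gamma>"
      then have ag: "\<alpha> > \<gamma>" by simp
      have "(g has_real_derivative (- 1 / \<gamma>)) (at 0 within {0..1})" using B(2)[of 0] F(7) by simp
      then have "((\<lambda>y. (g y - g 0) / (y - 0)) \<longlongrightarrow> - 1 / \<gamma>) (at 0 within {0..1})"
        by (simp add: has_field_derivative_iff)
      moreover have "- 1 / \<gamma> < - 1 / \<alpha>" using ag gp by (simp add: field_simps)
      ultimately have "eventually (\<lambda>y. (g y - g 0) / (y - 0) < - 1 / \<alpha>) (at 0 within {0..1})"
        by (rule order_tendstoD(2))
      then obtain d where d: "d > 0" "\<And>y. y \<in> {0..1} \<Longrightarrow> y \<noteq> 0 \<Longrightarrow> dist y 0 < d \<Longrightarrow> (g y - g 0) / (y - 0) < - 1 / \<alpha>"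
        unfolding eventually_at by auto
      define y where "y = min (d / 2) 1"
      have y: "y \<in> {0..1}" "y > 0" "dist y 0 < d" using d unfolding y_def by auto
      have "(g y - 1) / y < - 1 / \<alpha>" using d(2)[OF y(1)] y g0 by auto
      then have "g y - 1 < - y / \<alpha>" using y by (simp add: field_simps)
      then have "\<alpha> * (g y - 1) < \<alpha> * (- y / \<alpha>)" using ag gp by (intro mult_strict_left_mono) auto
      then have "\<alpha> * g y < \<alpha> - y" using ag gp by (simp add: algebra_simps)
      moreover have "\<alpha> - y \<le> \<alpha> * g y" using a y by auto
      ultimately show False by simp
    qed
    show ?thesis unfolding stride_def
      by (rule cSup_eq_maximum[OF mem]) (use ub in auto)
  qed
  have hh0: "h (h y) \<noteq> 0" if y: "y \<in> {0<..1}" for y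
  proof
    assume "h (h y) = 0"
    then have "g 0 = h y" using F(4)[of "h y"] F(4)[of y] y by auto
    then have "h y = 1" using g0 by simp
    then show False using F(4)[of y] y g1 by auto
  qed
  have hcomp: "continuous_on {0<..1} (\<lambda>y. h (h y))"
    by (rule continuous_on_compose2[OF F(3) continuous_on_subset[OF F(3)]]) (use F(4) in auto)
  show "continuous_on {0<..1} (\<lambda>y. - \<gamma> / h (h y))"
    by (intro continuous_intros hcomp) (use hh0 in auto)
  show "continuous_on {0<..1} (\<lambda>y. 1 / h (h y))"
    by (intro continuous_intros hcomp) (use hh0 in auto)
  show "(h has_real_derivative (- \<gamma> / h (h y))) (at y within {0..1})" if y: "y \<in> {0<..1}" for y
  proof -
    define a where "a = h y"
    have a: "a \<in> {0..1}" "g a = y" using F(4)[of y] y unfolding a_def by auto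
    have ha: "h a \<noteq> 0" using hh0[OF y] unfolding a_def .
    have "(g has_derivative (*) (- h a / \<gamma>)) (at a within {0..1})"
      using B(2)[OF a(1)] by (simp add: has_field_derivative_def)
    then have "(h has_derivative (*) (- \<gamma> / h a)) (at (g a) within g ` {0..1})"
    proof (rule has_derivative_inverse_within)
      show "continuous (at (g a) within g ` {0..1}) h"
        using F(3) F(1) a y by (simp add: continuous_on_eq_continuous_within)
      show "a \<in> {0..1}" by fact
      show "linear ((*) (- \<gamma> / h a))" using linear_times[of "- \<gamma> / h a"] by (simp add: fun_eq_iff)
      show "(*) (- \<gamma> / h a) \<circ> (*) (- h a / \<gamma>) = id" using ha gp by (auto simp: fun_eq_iff)
      show "\<And>x. x \<in> {0..1} \<Longrightarrow> h (g x) = x" by (rule F(5))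
    qed
    then show ?thesis using a F(1) unfolding a_def by (simp add: has_field_derivative_def)
  qed
qed


theorem proposition2p3:
  fixes g :: "real \<Rightarrow> real"
  assumes "classC g"
  shows "((\<forall>x\<in>{0..1}. Top g x = g x) \<longleftrightarrow> (\<exists>\<gamma>>0. solves_ode \<gamma> g))
    \<and> (\<forall>\<gamma>>0. solves_ode \<gamma> g \<longrightarrow>
         classD_sharp_convex g
       \<and> integral {0..1} g = \<gamma>
       \<and> stride g = \<gamma>
       \<and> C1_on01 (gstar g)
       \<and> (\<exists>g1. deriv_on01 g g1 \<and> C1_on01 g1)
       \<and> (\<exists>g1 g2. deriv_on01 g g1 \<and> deriv_on01 g1 g2 \<and> g2 1 = 1)
       \<and> (\<exists>h1. deriv_on01 (gstar g) h1 \<and> h1 1 = - \<gamma>))"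
proof -
  note C = assms
  let ?h = "inv_into {0..1} g"
  have g0: "g 0 = 1" and g1: "g 1 = 0" and Ipos: "integral {0..1} g > 0"
    using C unfolding classC_def classE_def by auto
  have part1: "(\<forall>x\<in>{0..1}. Top g x = g x) \<longleftrightarrow> (\<exists>\<gamma>>0. solves_ode \<gamma> g)"
  proof
    assume T: "\<forall>x\<in>{0..1}. Top g x = g x"
    note inj = fwd_inj[OF C T]
    note F = inj_facts[OF C inj]
    let ?I = "integral {0..1} g"
    have "solves_ode ?I g"
      unfolding solves_ode_def
    proof
      show "bij_betw g {0..1} {0..1}" using inj F(1) by (simp add: bij_betw_def)
      show "\<forall>x\<in>{0..1}. (g has_real_derivative - ?h x / ?I) (at x within {0..1})"
      proof
        fix x :: real assume x: "x \<in> {0..1}"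
        have "((\<lambda>u. integral {u..1} ?h / ?I) has_real_derivative - ?h x / ?I) (at x within {0..1})"
          using DERIV_cdivide[OF integral_has_real_derivative'[OF F(3) x], of ?I] by simp
        then show "(g has_real_derivative - ?h x / ?I) (at x within {0..1})"
        proof (rule has_field_derivative_transform_within[OF _ zero_less_one x])
          fix u :: real assume u: "u \<in> {0..1}" "dist u x < 1"
          have "integral {u..1} (gstar g) = integral {u..1} ?h"
            by (rule integral_cong) (use u F(6) in auto)
          moreover have "Top g u = g u" using T u by auto
          ultimately show "integral {u..1} ?h / ?I = g u" unfolding Top_def by simp
        qed
      qed
    qed
    then show "\<exists>\<gamma>>0. solves_ode \<gamma> g" using Ipos by blast
  next
    assume "\<exists>\<gamma>>0. solves_ode \<gamma> g"
    then obtain \<gamma> where gp: "\<gamma> > 0" and S: "solves_ode \<gamma> g" by blast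
    note B = ode_basic[OF C gp S]
    note F = inj_facts[OF C B(1)]
    show "\<forall>x\<in>{0..1}. Top g x = g x"
    proof
      fix x :: real assume x: "x \<in> {0..1}"
      have "integral {x..1} (gstar g) = integral {x..1} ?h"
        by (rule integral_cong) (use x F(6) in auto)
      then show "Top g x = g x" unfolding Top_def using B(3)[OF x] B(5) by simp
    qed
  qed
  have part2: "classD_sharp_convex g
       \<and> integral {0..1} g = \<gamma>
       \<and> stride g = \<gamma>
       \<and> C1_on01 (gstar g)
       \<and> (\<exists>g1. deriv_on01 g g1 \<and> C1_on01 g1)
       \<and> (\<exists>g1 g2. deriv_on01 g g1 \<and> deriv_on01 g1 g2 \<and> g2 1 = 1)
       \<and> (\<exists>h1. deriv_on01 (gstar g) h1 \<and> h1 1 = - \<gamma>)"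
    if gp: "\<gamma> > 0" and S: "solves_ode \<gamma> g" for \<gamma>
  proof -
    note B = ode_basic[OF C gp S]
    note F = inj_facts[OF C B(1)]
    note M = ode_more[OF C gp S]
    define g1 where "g1 x = - ?h x / \<gamma>" for x
    define g2 where "g2 y = 1 / ?h (?h y)" for y
    define h1 where "h1 y = - \<gamma> / ?h (?h y)" for y
    have dg: "deriv_on01 g g1" unfolding deriv_on01_def g1_def using B(2) by auto
    have g1c: "continuous_on {0..1} g1" unfolding g1_def using gp by (intro continuous_intros F(3)) auto
    have g1c': "continuous_on {0<..1} g1" by (rule continuous_on_subset[OF g1c]) auto
    have dh: "deriv_on01 ?h h1" unfolding deriv_on01_def h1_def using M(3) by auto
    have dgs: "deriv_on01 (gstar g) h1"
      unfolding deriv_on01_def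
    proof
      fix y :: real assume y: "y \<in> {0<..1}"
      show "(gstar g has_real_derivative h1 y) (at y within {0..1})"
        by (rule has_field_derivative_transform_within[OF dh[unfolded deriv_on01_def, rule_format, OF y] zero_less_one])
           (use y F(6) in auto)
    qed
    have h1c: "continuous_on {0<..1} h1" unfolding h1_def by (rule M(4))
    have dg1: "deriv_on01 g1 g2"
      unfolding deriv_on01_def
    proof
      fix y :: real assume y: "y \<in> {0<..1}"
      have "(g1 has_real_derivative - (h1 y) / \<gamma>) (at y within {0..1})"
        unfolding g1_def
        using DERIV_cdivide[OF DERIV_minus[OF dh[unfolded deriv_on01_def, rule_format, OF y]], of \<gamma>] by simp
      moreover have "- (h1 y) / \<gamma> = g2 y" unfolding h1_def g2_def using gp by simp
      ultimately show "(g1 has_real_derivative g2 y) (at y within {0..1})" by simp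
    qed
    have g2c: "continuous_on {0<..1} g2" unfolding g2_def by (rule M(5))
    have g1_1: "g1 1 = 0" unfolding g1_def using F(8) by simp
    have g2_1: "g2 1 = 1" unfolding g2_def using F(7) F(8) by simp
    have h1_1: "h1 1 = - \<gamma>" unfolding h1_def using F(7) F(8) by simp
    have lim: "(g1 \<longlongrightarrow> g1 0) (at_right 0)"
    proof -
      have "(g1 \<longlongrightarrow> g1 0) (at 0 within {0..1})"
        using g1c by (simp add: continuous_on_eq_continuous_within continuous_within)
      then show ?thesis by (simp add: at_within_Icc_at_right)
    qed
    have g1_0: "g1 0 \<le> 0" unfolding g1_def using F(7) gp by simp
    have C1g: "C1_on01 g" unfolding C1_on01_def using dg g1c' by blast
    have sharp: "classD_sharp g"
      unfolding classD_sharp_def classD'_def classD_def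
      using C F(2) C1g dg g1_1 lim g1_0 by blast
    have conv: "classC_convex g" unfolding classC_convex_def using C M(1) by blast
    show ?thesis
      using sharp conv B(5) M(2) dgs h1c dg g1c' dg1 g2c g2_1 h1_1
      unfolding classD_sharp_convex_def C1_on01_def by blast
  qed
  show ?thesis using part1 part2 by blast
qed

end
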